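(* Let $d\ge3$ and consider the two-link parallel network with unit demand and latencies $\ell_1(x_1)=x_1^d$ and $\ell_2(x_2)=\left(\frac{d-1}{d}\right)^d$ (constant). Then $\mathcal{T}(c)\ne\emptyset$ if and only if $c\le\left(\frac{d-1}{d}\right)^{d-1}$; for such $c$, $\mathcal{T}(c)=\{(c,c)\}$ and the induced flow is $x(c)=x(0)=\left(\frac{d-1}{d},\frac1d\right)$. With the convention that $\sup_{t\in\emptyset}C(x(t))=\infty$, it follows that $$\inf_{c\in\mathbb{R}_+}\ \sup_{t\in\mathcal{T}(c)}\frac{C(x(t))}{C(x^* )}=\frac{(d+1)^{(d+1)/d}}{(d+1)^{(d+1)/d}-(d-1)},$$ where $x^*=\left(\frac{d-1}{d(d+1)^{1/d}},\,1-\frac{d-1}{d(d+1)^{1/d}}\right)$ is the optimal flow; this quantity tends to $\infty$ as $d\to\infty$.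
   Context: Flows $x\in\mathbb{R}^2_+$ with $x_1+x_2=1$; $C(x)=\sum_i\ell_i(x_i)x_i$; $x^*$ minimizes $C$. For tolls $t\in\mathbb{R}^2_+$, $x(t)$ is the unique Wardrop equilibrium for $t$ (for all $i,j$ with $x_i>0$: $\ell_i(x_i)+t_i\le\ell_j(x_j)+t_j$); $x(0)$ is the untolled one. Profit $\Pi_i(t)=t_ix_i(t)$. For $c\in\mathbb{R}_+$, $\mathcal{T}(c)$ is the set of toll vectors with $0\le t_i\le c$ such that for every $i$ and every $t'_i\in[0,c]$, $\Pi_i(t_i,t_{-i})\ge\Pi_i(t'_i,t_{-i})$ (flow recomputed as the Wardrop equilibrium). *)

theory Defs
  imports "HOL-Analysis.Analysis"
begin

definition feasible_flow :: "real \<times> real \<Rightarrow> bool" where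
  "feasible_flow x \<longleftrightarrow> fst x \<ge> 0 \<and> snd x \<ge> 0 \<and> fst x + snd x = 1"

text \<open>Wardrop equilibrium for toll vector t: every used link has minimal
tolled latency (the cases i = j are trivial).\<close>
definition wardrop ::
  "(real \<Rightarrow> real) \<Rightarrow> (real \<Rightarrow> real) \<Rightarrow> real \<times> real \<Rightarrow> real \<times> real \<Rightarrow> bool" where
  "wardrop l1 l2 t x \<longleftrightarrow> feasible_flow x
     \<and> (fst x > 0 \<longrightarrow> l1 (fst x) + fst t \<le> l2 (snd x) + snd t)
     \<and> (snd x > 0 \<longrightarrow> l2 (snd x) + snd t \<le> l1 (fst x) + fst t)"

text \<open>x(t): the (unique) Wardrop equilibrium for tolls t.\<close>
definition eq_flow ::
  "(real \<Rightarrow> real) \<Rightarrow> (real \<Rightarrow> real) \<Rightarrow> real \<times> real \<Rightarrow> real \<times> real" where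
  "eq_flow l1 l2 t = (THE x. wardrop l1 l2 t x)"

definition social_cost :: "(real \<Rightarrow> real) \<Rightarrow> (real \<Rightarrow> real) \<Rightarrow> real \<times> real \<Rightarrow> real" where
  "social_cost l1 l2 x = l1 (fst x) * fst x + l2 (snd x) * snd x"

definition profit1 :: "(real \<Rightarrow> real) \<Rightarrow> (real \<Rightarrow> real) \<Rightarrow> real \<times> real \<Rightarrow> real" where
  "profit1 l1 l2 t = fst t * fst (eq_flow l1 l2 t)"

definition profit2 :: "(real \<Rightarrow> real) \<Rightarrow> (real \<Rightarrow> real) \<Rightarrow> real \<times> real \<Rightarrow> real" where
  "profit2 l1 l2 t = snd t * snd (eq_flow l1 l2 t)"

definition toll_eq :: "(real \<Rightarrow> real) \<Rightarrow> (real \<Rightarrow> real) \<Rightarrow> real \<Rightarrow> (real \<times> real) set" where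
  "toll_eq l1 l2 c = {t. 0 \<le> fst t \<and> fst t \<le> c \<and> 0 \<le> snd t \<and> snd t \<le> c
     \<and> (\<forall>t1' \<in> {0..c}. profit1 l1 l2 t \<ge> profit1 l1 l2 (t1', snd t))
     \<and> (\<forall>t2' \<in> {0..c}. profit2 l1 l2 t \<ge> profit2 l1 l2 (fst t, t2'))}"

definition worst_ratio ::
  "(real \<Rightarrow> real) \<Rightarrow> (real \<Rightarrow> real) \<Rightarrow> real \<times> real \<Rightarrow> real \<Rightarrow> ereal" where
  "worst_ratio l1 l2 xopt c = (if toll_eq l1 l2 c = {} then \<infinity>
     else (SUP t \<in> toll_eq l1 l2 c.
             ereal (social_cost l1 l2 (eq_flow l1 l2 t) / social_cost l1 l2 xopt)))"

definition lat1 :: "nat \<Rightarrow> real \<Rightarrow> real" where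
  "lat1 d y = y ^ d"

definition lat2 :: "nat \<Rightarrow> real \<Rightarrow> real" where
  "lat2 d y = ((real d - 1) / real d) ^ d"

definition ratio_value :: "nat \<Rightarrow> real" where
  "ratio_value d = (real d + 1) powr ((real d + 1) / real d)
     / ((real d + 1) powr ((real d + 1) / real d) - (real d - 1))"

end

theory Submission
  imports Defs "HOL-Real_Asymp.Real_Asymp"
begin

lemma conv_pow:
  fixes a y :: real assumes a: "0 \<le> a" and y: "0 \<le> y"
  shows "y ^ n \<ge> a ^ n + real n * a ^ (n - 1) * (y - a)"
proof (induction n)
  case 0 then show ?case by simp
next
  case (Suc n)
  show ?case
  proof (cases n)
    case 0 then show ?thesis by simp
  next
    case (Suc m)
    have IH: "y ^ n \<ge> a ^ m * a + real n * a ^ m * (y - a)"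
      using Suc.IH Suc by (simp add: mult.commute)
    have "y ^ Suc n = y * y ^ n" by simp
    also have "\<dots> \<ge> y * (a ^ m * a + real n * a ^ m * (y - a))"
      using IH y by (simp add: mult_left_mono)
    finally have 1: "y ^ Suc n \<ge> y * (a ^ m * a + real n * a ^ m * (y - a))" .
    have 2: "y * (a ^ m * a + real n * a ^ m * (y - a)) - (a ^ m * a * a + real (Suc n) * (a ^ m * a) * (y - a))
        = real n * a ^ m * (y - a)^2"
      by (simp add: algebra_simps power2_eq_square)
    have 3: "real n * a ^ m * (y - a)^2 \<ge> 0" using a by simp
    have "a ^ Suc n = a ^ m * a * a" "a ^ (Suc n - 1) = a ^ m * a" using Suc by (simp_all add: mult.commute)
    hence "a ^ Suc n + real (Suc n) * a ^ (Suc n - 1) * (y - a) = a ^ m * a * a + real (Suc n) * (a ^ m * a) * (y - a)"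
      by simp
    then show ?thesis using 1 2 3 by linarith
  qed
qed

lemma pow_lip:
  fixes u v :: real assumes "0 \<le> u" "u \<le> v" "v \<le> 1"
  shows "v ^ n - u ^ n \<le> real n * (v - u)"
proof -
  have "u ^ n \<ge> v ^ n + real n * v ^ (n - 1) * (u - v)" using conv_pow[of v u n] assms by simp
  moreover have "v ^ (n - 1) \<le> 1" using assms by (simp add: power_le_one)
  moreover have "real n * v ^ (n - 1) * (v - u) \<le> real n * 1 * (v - u)"
    using assms calculation(2) by (intro mult_right_mono mult_left_mono) auto
  ultimately show ?thesis by (simp add: algebra_simps)
qed

lemma amgm:
  fixes y :: real and n :: nat assumes n: "n \<ge> 1" and y: "0 \<le> y" "y \<le> 1"
  and a: "a = real n / (real n + 1)"
  shows "y ^ n * (1 - y) \<le> a ^ n * (1 - a)"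
proof -
  have a0: "0 \<le> a" using a by simp
  obtain m where m: "n = Suc m" using n by (cases n) auto
  have c: "a ^ n \<ge> y ^ n + real n * y ^ m * (a - y)" using conv_pow[OF y(1) a0, of n] m by simp
  have yn: "y ^ n = y ^ m * y" using m by (simp add: mult.commute)
  have an: "a ^ n * a \<ge> a * (y ^ m * y + real n * y ^ m * (a - y))" using c a0 yn
    by (metis mult.commute mult_left_mono)
  have key: "a * (y ^ m * y + real n * y ^ m * (a - y)) - real n * (y ^ m * y) * (1 - y)
     = y ^ m * (real n * (y - a)^2)"
  proof -
    have e: "(real n - 1) * a + real n = 2 * real n * a" using a by (simp add: field_simps)
    have "a * (y ^ m * y + real n * y ^ m * (a - y)) - real n * (y ^ m * y) * (1 - y)
      = y ^ m * (real n * y^2 - ((real n - 1) * a + real n) * y + real n * a^2)"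
      by (simp add: algebra_simps power2_eq_square)
    also have "\<dots> = y ^ m * (real n * (y - a)^2)" unfolding e by (simp add: algebra_simps power2_eq_square)
    finally show ?thesis .
  qed
  have "y ^ m * (real n * (y - a)^2) \<ge> 0" using y by simp
  hence "a ^ n * a \<ge> real n * (y ^ n) * (1 - y)" using an key unfolding yn by linarith
  moreover have "1 - a = a / real n" using a n by (simp add: field_simps)
  hence "a ^ n * (1 - a) = a ^ n * a / real n" by simp
  moreover have "y ^ n * (1 - y) \<le> a ^ n * a / real n"
    using calculation(1) n by (simp add: le_divide_eq mult.commute mult.left_commute)
  ultimately show ?thesis by simp
qed

lemma W_int:
  fixes L :: real assumes "0 < y" "y < 1" "y ^ d = L + snd t - fst t"
  shows "wardrop (\<lambda>y. y ^ d) (\<lambda>_. L) t (y, 1 - y)"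
  using assms unfolding wardrop_def feasible_flow_def by auto

lemma W_zero:
  fixes L :: real assumes "d \<ge> 1" "L + snd t - fst t \<le> 0"
  shows "wardrop (\<lambda>y. y ^ d) (\<lambda>_. L) t (0, 1)"
  using assms unfolding wardrop_def feasible_flow_def by (auto simp: zero_power)

lemma W_one:
  fixes L :: real assumes "L + snd t - fst t \<ge> 1"
  shows "wardrop (\<lambda>y. y ^ d) (\<lambda>_. L) t (1, 0)"
  using assms unfolding wardrop_def feasible_flow_def by auto

lemma W_unique:
  fixes L :: real assumes d: "d \<ge> 1"
    and w: "wardrop (\<lambda>y. y ^ d) (\<lambda>_. L) t x" and w': "wardrop (\<lambda>y. y ^ d) (\<lambda>_. L) t x'"
  shows "x = x'"
proof -
  have *: False if w1: "wardrop (\<lambda>y. y ^ d) (\<lambda>_. L) t u" and w2: "wardrop (\<lambda>y. y ^ d) (\<lambda>_. L) t v"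
    and lt: "fst u < fst v" for u v
  proof -
    from w1 w2 have f: "0 \<le> fst u" "snd u = 1 - fst u" "snd v = 1 - fst v" "fst v \<le> 1"
      unfolding wardrop_def feasible_flow_def by auto
    have "fst v > 0" using f lt by linarith
    hence 1: "fst v ^ d + fst t \<le> L + snd t" using w2 unfolding wardrop_def by auto
    have "snd u > 0" using f lt by linarith
    hence 2: "L + snd t \<le> fst u ^ d + fst t" using w1 unfolding wardrop_def by auto
    have "fst u ^ d < fst v ^ d" using lt f d by (intro power_strict_mono) auto
    then show False using 1 2 by linarith
  qed
  have "\<not> fst x < fst x'" "\<not> fst x' < fst x" using *[OF w w'] *[OF w' w] by blast+
  hence "fst x = fst x'" by linarith
  moreover have "snd x = 1 - fst x" "snd x' = 1 - fst x'" using w w' unfolding wardrop_def feasible_flow_def by auto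
  ultimately show ?thesis by (simp add: prod_eq_iff)
qed

lemma eq_flow_eq:
  fixes L :: real assumes d: "d \<ge> 1" and w: "wardrop (\<lambda>y. y ^ d) (\<lambda>_. L) t x"
  shows "eq_flow (\<lambda>y. y ^ d) (\<lambda>_. L) t = x"
  unfolding eq_flow_def
proof (rule the_equality)
  show "wardrop (\<lambda>y. y ^ d) (\<lambda>_. L) t x" by (rule w)
  fix x' assume "wardrop (\<lambda>y. y ^ d) (\<lambda>_. L) t x'"
  then show "x' = x" using W_unique[OF d w] by simp
qed

lemma eq_flow_explicit:
  fixes L :: real assumes d: "d \<ge> 1"
  shows "eq_flow (\<lambda>y. y ^ d) (\<lambda>_. L) t =
    (let s = L + snd t - fst t in if s \<le> 0 then (0, 1) else if s \<ge> 1 then (1, 0)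
       else (root d s, 1 - root d s))"
proof -
  define s where "s = L + snd t - fst t"
  consider "s \<le> 0" | "\<not> s \<le> 0" "s \<ge> 1" | "0 < s" "s < 1" by linarith
  then show ?thesis
  proof cases
    case 1
    have "eq_flow (\<lambda>y. y ^ d) (\<lambda>_. L) t = (0, 1)"
      by (rule eq_flow_eq[OF d W_zero[OF d]]) (use 1 in \<open>simp add: s_def\<close>)
    then show ?thesis using 1 by (simp only: Let_def s_def[symmetric] if_P)
  next
    case 2
    have "eq_flow (\<lambda>y. y ^ d) (\<lambda>_. L) t = (1, 0)"
      by (rule eq_flow_eq[OF d W_one]) (use 2 in \<open>simp add: s_def\<close>)
    then show ?thesis using 2 by (simp only: Let_def s_def[symmetric] if_P if_not_P if_False)
  next
    case 3
    have r: "0 < root d s" "root d s < 1" "root d s ^ d = s" using 3 d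
      by (simp_all add: real_root_lt_1_iff real_root_pow_pos)
    have "eq_flow (\<lambda>y. y ^ d) (\<lambda>_. L) t = (root d s, 1 - root d s)"
      by (rule eq_flow_eq[OF d W_int]) (use r in \<open>simp_all add: s_def\<close>)
    then show ?thesis using 3 by (simp only: Let_def s_def[symmetric] if_not_P not_le)
  qed
qed

lemma focA:
  fixes d :: nat and L t1 t2 c x :: real
  assumes d: "d \<ge> 1" and x: "0 < x" "x < 1" and xd: "x ^ d = L + t2 - t1" and t1: "0 \<le> t1" "t1 \<le> c"
  and dev: "\<And>y \<tau>. 0 < y \<Longrightarrow> y < 1 \<Longrightarrow> \<tau> = L + t2 - y ^ d \<Longrightarrow> 0 \<le> \<tau> \<Longrightarrow> \<tau> \<le> c \<Longrightarrow> \<tau> * y \<le> t1 * x"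
  shows "t1 \<le> real d * x ^ d"
proof (rule ccontr)
  assume neg: "\<not> ?thesis"
  define D where "D = real d"
  have D: "D \<ge> 1" using d by (simp add: D_def)
  define \<delta> where "\<delta> = t1 - D * x ^ d"
  have \<delta>: "\<delta> > 0" using neg by (simp add: \<delta>_def D_def)
  have xd0: "x ^ d > 0" using x by simp
  have "D * x ^ d \<ge> 0" using D xd0 by simp
  hence t1p: "t1 > 0" using \<delta> unfolding \<delta>_def by linarith
  define e where "e = min (min ((1-x)/2) (t1/D)) (\<delta>/(2*D*(D+1)))"
  have e0: "e > 0" using x t1p D \<delta> by (simp add: e_def)
  have e1: "e \<le> (1-x)/2" and e2: "e \<le> t1/D" and e3: "e \<le> \<delta>/(2*D*(D+1))" unfolding e_def by (simp_all only: min_le_iff_disj order_refl simp_thms)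
  have De: "D * e \<le> t1" using e2 D by (simp add: le_divide_eq mult.commute)
  have pos: "2*D*(D+1) > 0" using D by simp
  have "e * (2*D*(D+1)) \<le> \<delta>" using e3 pos by (simp add: pos_le_divide_eq)
  moreover have "e * (2*D*(D+1)) = 2*(D*(D+1)*e)" by (simp add: algebra_simps)
  ultimately have Dde: "D*(D+1)*e \<le> \<delta>/2" by linarith
  define y where "y = x + e"
  have y: "0 < y" "y < 1" "x \<le> y" using x e0 e1 by (simp_all add: y_def)
  define \<tau> where "\<tau> = t1 + x ^ d - y ^ d"
  have lip: "y ^ d - x ^ d \<le> D * e" using pow_lip[of x y d] x y by (simp add: D_def y_def)
  have mono: "x ^ d \<le> y ^ d" using x y by (simp add: power_mono)
  have "\<tau> * y \<le> t1 * x"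
    by (rule dev) (use y xd lip mono De t1 in \<open>simp_all add: \<tau>_def\<close>)
  have F2: "y ^ Suc d - x ^ Suc d \<le> (D+1) * y ^ d * e"
    using conv_pow[of y x "Suc d"] x y by (simp add: D_def y_def algebra_simps)
  have F3: "(D+1) * y ^ d * e \<le> (D+1) * (x ^ d + D * e) * e"
    using lip e0 D by (intro mult_right_mono mult_left_mono) auto
  have "e * (\<delta>/2) \<le> e * (\<delta> - D*(D+1)*e)" using e0 Dde by (intro mult_left_mono) auto
  also have "\<dots> = t1*e + x^d*e - (D+1) * (x ^ d + D * e) * e" by (simp add: \<delta>_def algebra_simps)
  also have "\<dots> \<le> t1*e + x^d*e - (D+1) * y ^ d * e" using F3 by linarith
  also have "\<dots> \<le> t1*e + x^d*e + x ^ Suc d - y ^ Suc d" using F2 by linarith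
  also have "\<dots> = \<tau> * y - t1 * x" by (simp add: \<tau>_def y_def algebra_simps)
  finally have "e * (\<delta>/2) \<le> \<tau> * y - t1 * x" .
  moreover have "e * (\<delta>/2) > 0" using e0 \<delta> by simp
  ultimately show False using \<open>\<tau> * y \<le> t1 * x\<close> by linarith
qed

lemma focA2:
  fixes d :: nat and L t1 t2 c x :: real
  assumes d: "d \<ge> 1" and x: "0 < x" "x < 1" and xd: "x ^ d = L + t2 - t1" and t1: "0 \<le> t1" "t1 < c"
  and dev: "\<And>y \<tau>. 0 < y \<Longrightarrow> y < 1 \<Longrightarrow> \<tau> = L + t2 - y ^ d \<Longrightarrow> 0 \<le> \<tau> \<Longrightarrow> \<tau> \<le> c \<Longrightarrow> \<tau> * y \<le> t1 * x"
  shows "real d * x ^ d \<le> t1"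
proof (rule ccontr)
  assume neg: "\<not> ?thesis"
  define D where "D = real d"
  have D: "D \<ge> 1" using d by (simp add: D_def)
  define \<delta> where "\<delta> = D * x ^ d - t1"
  have \<delta>: "\<delta> > 0" using neg by (simp add: \<delta>_def D_def)
  define e where "e = min (min (x/2) ((c-t1)/D)) (\<delta>/(2*D*(D+1)))"
  have e0: "e > 0" using x t1 D \<delta> by (simp add: e_def)
  have e1: "e \<le> x/2" and e2: "e \<le> (c-t1)/D" and e3: "e \<le> \<delta>/(2*D*(D+1))"
    unfolding e_def by (simp_all only: min_le_iff_disj order_refl simp_thms)
  have De: "D * e \<le> c - t1" using e2 D by (simp add: le_divide_eq mult.commute)
  have pos: "2*D*(D+1) > 0" using D by simp
  have "e * (2*D*(D+1)) \<le> \<delta>" using e3 pos by (simp add: pos_le_divide_eq)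
  moreover have "e * (2*D*(D+1)) = 2*(D*(D+1)*e)" by (simp add: algebra_simps)
  ultimately have Dde: "D*(D+1)*e \<le> \<delta>/2" by linarith
  define y where "y = x - e"
  have y: "0 < y" "y < 1" "y \<le> x" using x e0 e1 by (simp_all add: y_def)
  define \<tau> where "\<tau> = t1 + x ^ d - y ^ d"
  have lip: "x ^ d - y ^ d \<le> D * e" using pow_lip[of y x d] x y by (simp add: D_def y_def)
  have mono: "y ^ d \<le> x ^ d" using x y by (simp add: power_mono)
  have "\<tau> * y \<le> t1 * x"
    by (rule dev) (use y xd lip mono De t1 in \<open>simp_all add: \<tau>_def\<close>)
  have F2: "x ^ Suc d - y ^ Suc d \<ge> (D+1) * y ^ d * e"
    using conv_pow[of y x "Suc d"] x y by (simp add: D_def y_def algebra_simps)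
  have F3: "(D+1) * (x ^ d - D * e) * e \<le> (D+1) * y ^ d * e"
    using lip e0 D by (intro mult_right_mono mult_left_mono) auto
  have "e * (\<delta>/2) \<le> e * (\<delta> - D*(D+1)*e)" using e0 Dde by (intro mult_left_mono) auto
  also have "\<dots> = - t1*e - x^d*e + (D+1) * (x ^ d - D * e) * e" by (simp add: \<delta>_def algebra_simps)
  also have "\<dots> \<le> - t1*e - x^d*e + (D+1) * y ^ d * e" using F3 by linarith
  also have "\<dots> \<le> - t1*e - x^d*e + x ^ Suc d - y ^ Suc d" using F2 by linarith
  also have "\<dots> = \<tau> * y - t1 * x" by (simp add: \<tau>_def y_def algebra_simps)
  finally have "e * (\<delta>/2) \<le> \<tau> * y - t1 * x" .
  moreover have "e * (\<delta>/2) > 0" using e0 \<delta> by simp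
  ultimately show False using \<open>\<tau> * y \<le> t1 * x\<close> by linarith
qed

lemma focB:
  fixes d :: nat and L t1 t2 c x :: real
  assumes d: "d \<ge> 1" and x: "0 < x" "x < 1" and xd: "x ^ d = L + t2 - t1" and t2: "0 \<le> t2" "t2 \<le> c"
  and dev: "\<And>y \<sigma>. 0 < y \<Longrightarrow> y < 1 \<Longrightarrow> \<sigma> = t1 - L + y ^ d \<Longrightarrow> 0 \<le> \<sigma> \<Longrightarrow> \<sigma> \<le> c \<Longrightarrow> \<sigma> * (1 - y) \<le> t2 * (1 - x)"
  shows "t2 \<le> real d * x ^ (d - 1) * (1 - x)"
proof (rule ccontr)
  assume neg: "\<not> ?thesis"
  define D where "D = real d"
  have D: "D \<ge> 1" using d by (simp add: D_def)
  define \<delta> where "\<delta> = t2 - D * x ^ (d - 1) * (1 - x)"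
  have \<delta>: "\<delta> > 0" using neg by (simp add: \<delta>_def D_def)
  have xd1: "x ^ (d - 1) \<le> 1" "x ^ (d - 1) \<ge> 0" using x by (simp_all add: power_le_one)
  have "D * x ^ (d - 1) * (1 - x) \<ge> 0" using D x xd1 by simp
  hence t2p: "t2 > 0" using \<delta> unfolding \<delta>_def by linarith
  define e where "e = min (min (x/2) (t2/D)) (\<delta>/(2*D))"
  have e0: "e > 0" using x t2p D \<delta> by (simp add: e_def)
  have e1: "e \<le> x/2" and e2: "e \<le> t2/D" and e3: "e \<le> \<delta>/(2*D)"
    unfolding e_def by (simp_all only: min_le_iff_disj order_refl simp_thms)
  have De: "D * e \<le> t2" using e2 D by (simp add: le_divide_eq mult.commute)
  have "e * (2*D) \<le> \<delta>" using e3 D by (simp add: pos_le_divide_eq)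
  hence Dde: "D*e \<le> \<delta>/2" by (simp add: algebra_simps)
  define y where "y = x - e"
  have y: "0 < y" "y < 1" "y \<le> x" using x e0 e1 by (simp_all add: y_def)
  define \<sigma> where "\<sigma> = t2 - x ^ d + y ^ d"
  have lip: "x ^ d - y ^ d \<le> D * e" using pow_lip[of y x d] x y by (simp add: D_def y_def)
  have mono: "y ^ d \<le> x ^ d" using x y by (simp add: power_mono)
  have "\<sigma> * (1 - y) \<le> t2 * (1 - x)"
    by (rule dev) (use y xd lip mono De t2 in \<open>simp_all add: \<sigma>_def\<close>)
  have F2: "x ^ d - y ^ d \<le> D * x ^ (d - 1) * e"
    using conv_pow[of x y d] x y by (simp add: D_def y_def algebra_simps)
  have F3: "(x ^ d - y ^ d) * (1 - x + e) \<le> (D * x ^ (d - 1) * e) * (1 - x + e)"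
    using F2 x e0 by (intro mult_right_mono) auto
  have F4: "D * x ^ (d - 1) * e * e \<le> D * e * e" using xd1 D e0 by (intro mult_right_mono mult_left_mono) auto
  have "e * (\<delta>/2) \<le> e * (\<delta> - D*e)" using e0 Dde by (intro mult_left_mono) auto
  also have "\<dots> = t2*e - D * x ^ (d - 1) * (1 - x) * e - D * e * e" by (simp add: \<delta>_def algebra_simps)
  also have "\<dots> \<le> t2*e - D * x ^ (d - 1) * (1 - x) * e - D * x ^ (d - 1) * e * e" using F4 by linarith
  also have "\<dots> = t2*e - (D * x ^ (d - 1) * e) * (1 - x + e)" by (simp add: algebra_simps)
  also have "\<dots> \<le> t2*e - (x ^ d - y ^ d) * (1 - x + e)" using F3 by linarith
  also have "\<dots> = \<sigma> * (1 - y) - t2 * (1 - x)" by (simp add: \<sigma>_def y_def algebra_simps)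
  finally have "e * (\<delta>/2) \<le> \<sigma> * (1 - y) - t2 * (1 - x)" .
  moreover have "e * (\<delta>/2) > 0" using e0 \<delta> by simp
  ultimately show False using \<open>\<sigma> * (1 - y) \<le> t2 * (1 - x)\<close> by linarith
qed

lemma focB2:
  fixes d :: nat and L t1 t2 c x :: real
  assumes d: "d \<ge> 1" and x: "0 < x" "x < 1" and xd: "x ^ d = L + t2 - t1" and t2: "0 \<le> t2" "t2 < c"
  and dev: "\<And>y \<sigma>. 0 < y \<Longrightarrow> y < 1 \<Longrightarrow> \<sigma> = t1 - L + y ^ d \<Longrightarrow> 0 \<le> \<sigma> \<Longrightarrow> \<sigma> \<le> c \<Longrightarrow> \<sigma> * (1 - y) \<le> t2 * (1 - x)"
  shows "real d * x ^ (d - 1) * (1 - x) \<le> t2"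
proof (rule ccontr)
  assume neg: "\<not> ?thesis"
  define D where "D = real d"
  have D: "D \<ge> 1" using d by (simp add: D_def)
  define \<delta> where "\<delta> = D * x ^ (d - 1) * (1 - x) - t2"
  have \<delta>: "\<delta> > 0" using neg by (simp add: \<delta>_def D_def)
  have xd1: "x ^ (d - 1) \<le> 1" "x ^ (d - 1) \<ge> 0" using x by (simp_all add: power_le_one)
  define e where "e = min (min ((1-x)/2) ((c-t2)/D)) (\<delta>/(2*D))"
  have e0: "e > 0" using x t2 D \<delta> by (simp add: e_def)
  have e1: "e \<le> (1-x)/2" and e2: "e \<le> (c-t2)/D" and e3: "e \<le> \<delta>/(2*D)"
    unfolding e_def by (simp_all only: min_le_iff_disj order_refl simp_thms)
  have De: "D * e \<le> c - t2" using e2 D by (simp add: le_divide_eq mult.commute)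
  have "e * (2*D) \<le> \<delta>" using e3 D by (simp add: pos_le_divide_eq)
  hence Dde: "D*e \<le> \<delta>/2" by (simp add: algebra_simps)
  define y where "y = x + e"
  have y: "0 < y" "y < 1" "x \<le> y" using x e0 e1 by (simp_all add: y_def)
  define \<sigma> where "\<sigma> = t2 - x ^ d + y ^ d"
  have lip: "y ^ d - x ^ d \<le> D * e" using pow_lip[of x y d] x y by (simp add: D_def y_def)
  have mono: "x ^ d \<le> y ^ d" using x y by (simp add: power_mono)
  have "\<sigma> * (1 - y) \<le> t2 * (1 - x)"
    by (rule dev) (use y xd lip mono De t2 in \<open>simp_all add: \<sigma>_def\<close>)
  have F2: "y ^ d - x ^ d \<ge> D * x ^ (d - 1) * e"
    using conv_pow[of x y d] x y by (simp add: D_def y_def algebra_simps)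
  have F3: "(D * x ^ (d - 1) * e) * (1 - x - e) \<le> (y ^ d - x ^ d) * (1 - x - e)"
    using F2 e1 e0 by (intro mult_right_mono) auto
  have F4: "D * x ^ (d - 1) * e * e \<le> D * e * e" using xd1 D e0 by (intro mult_right_mono mult_left_mono) auto
  have "e * (\<delta>/2) \<le> e * (\<delta> - D*e)" using e0 Dde by (intro mult_left_mono) auto
  also have "\<dots> = D * x ^ (d - 1) * (1 - x) * e - t2*e - D * e * e" by (simp add: \<delta>_def algebra_simps)
  also have "\<dots> \<le> D * x ^ (d - 1) * (1 - x) * e - t2*e - D * x ^ (d - 1) * e * e" using F4 by linarith
  also have "\<dots> = - t2*e + (D * x ^ (d - 1) * e) * (1 - x - e)" by (simp add: algebra_simps)
  also have "\<dots> \<le> - t2*e + (y ^ d - x ^ d) * (1 - x - e)" using F3 by linarith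
  also have "\<dots> = \<sigma> * (1 - y) - t2 * (1 - x)" by (simp add: \<sigma>_def y_def algebra_simps)
  finally have "e * (\<delta>/2) \<le> \<sigma> * (1 - y) - t2 * (1 - x)" .
  moreover have "e * (\<delta>/2) > 0" using e0 \<delta> by simp
  ultimately show False using \<open>\<sigma> * (1 - y) \<le> t2 * (1 - x)\<close> by linarith
qed

lemma pow_split: fixes z :: real assumes "d \<ge> 1" shows "z ^ d = z ^ (d - 1) * z"
  using assms by (cases d) (simp_all add: power_Suc2)

lemma T_subset:
  fixes d :: nat and a L c :: real and t :: "real \<times> real"
  assumes d3: "d \<ge> 3" and a: "a = (real d - 1) / real d" and L: "L = a ^ d" and c: "c > 0"
    and tT: "t \<in> toll_eq (\<lambda>y. y ^ d) (\<lambda>_. L) c"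
  shows "t = (c, c) \<and> c \<le> a ^ (d - 1)"
proof -
  have d: "d \<ge> 1" using d3 by simp
  define D where "D = real d"
  have D3: "D \<ge> 3" using d3 by (simp add: D_def)
  have Da: "D * a = D - 1" "D * (1 - a) = 1" using D3 by (simp_all add: a D_def field_simps)
  have a01: "0 < a" "a < 1" using D3 Da by (auto simp: a D_def field_simps)
  have L01: "0 < L" "L < 1" using a01 d power_strict_mono[of a 1 d] by (simp_all add: L)
  obtain t1 t2 where t: "t = (t1, t2)" by (cases t)
  let ?F = "eq_flow (\<lambda>y. y ^ d) (\<lambda>_. L)"
  have b: "0 \<le> t1" "t1 \<le> c" "0 \<le> t2" "t2 \<le> c" using tT by (simp_all add: toll_eq_def t)
  have dev1: "\<And>\<tau>. 0 \<le> \<tau> \<Longrightarrow> \<tau> \<le> c \<Longrightarrow> \<tau> * fst (?F (\<tau>, t2)) \<le> t1 * fst (?F (t1, t2))"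
    using tT by (simp add: toll_eq_def t profit1_def)
  have dev2: "\<And>\<sigma>. 0 \<le> \<sigma> \<Longrightarrow> \<sigma> \<le> c \<Longrightarrow> \<sigma> * snd (?F (t1, \<sigma>)) \<le> t2 * snd (?F (t1, t2))"
    using tT by (simp add: toll_eq_def t profit2_def)
  define s where "s = L + t2 - t1"
  have s0: "s > 0"
  proof (rule ccontr)
    assume "\<not> s > 0"
    hence "?F (t1, t2) = (0, 1)" using eq_flow_eq[OF d W_zero[OF d]] by (simp add: s_def)
    hence p0: "t1 * fst (?F (t1, t2)) = 0" by simp
    define m where "m = min c (L + t2)"
    have m: "m \<le> L + t2" "m \<le> c" "0 < m" using c L01 b by (auto simp: m_def)
    define \<tau> where "\<tau> = m / 2"
    have \<tau>: "0 < \<tau>" "\<tau> \<le> c" "0 < L + t2 - \<tau>"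
    proof -
      show "0 < \<tau>" unfolding \<tau>_def using m b by linarith
      show "\<tau> \<le> c" unfolding \<tau>_def using m b by linarith
      show "0 < L + t2 - \<tau>" unfolding \<tau>_def using m b by linarith
    qed
    have "fst (?F (\<tau>, t2)) > 0"
    proof (cases "L + t2 - \<tau> \<ge> 1")
      case True
      then show ?thesis using eq_flow_eq[OF d W_one, of L "(\<tau>, t2)"] by simp
    next
      case False
      have "0 < root d (L + t2 - \<tau>)" using \<tau> d by simp
      then show ?thesis using False \<tau> eq_flow_explicit[OF d, of L "(\<tau>, t2)"] by (simp add: Let_def)
    qed
    hence "\<tau> * fst (?F (\<tau>, t2)) > 0" using \<tau> by simp
    then show False using dev1[of \<tau>] \<tau> p0 by simp
  qed
  have s1: "s < 1"
  proof (rule ccontr)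
    assume "\<not> s < 1"
    hence "?F (t1, t2) = (1, 0)" using eq_flow_eq[OF d W_one] by (simp add: s_def)
    hence p0: "t2 * snd (?F (t1, t2)) = 0" by simp
    define m where "m = min c (1 - L)"
    have m: "m \<le> 1 - L" "m \<le> c" "0 < m" using c L01 b by (auto simp: m_def)
    define \<sigma> where "\<sigma> = m / 2"
    have \<sigma>: "0 < \<sigma>" "\<sigma> \<le> c" "L + \<sigma> - t1 < 1"
    proof -
      show "0 < \<sigma>" unfolding \<sigma>_def using m b by linarith
      show "\<sigma> \<le> c" unfolding \<sigma>_def using m b by linarith
      show "L + \<sigma> - t1 < 1" unfolding \<sigma>_def using m b by linarith
    qed
    have "snd (?F (t1, \<sigma>)) > 0"
    proof (cases "L + \<sigma> - t1 \<le> 0")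
      case True
      then show ?thesis using eq_flow_eq[OF d W_zero[OF d], of L "(t1, \<sigma>)"] by simp
    next
      case False
      have "root d (L + \<sigma> - t1) < 1" using \<sigma> d by simp
      then show ?thesis using False \<sigma> eq_flow_explicit[OF d, of L "(t1, \<sigma>)"] by (simp add: Let_def)
    qed
    hence "\<sigma> * snd (?F (t1, \<sigma>)) > 0" using \<sigma> by simp
    then show False using dev2[of \<sigma>] \<sigma> p0 by simp
  qed
  define x where "x = root d s"
  have x: "0 < x" "x < 1" "x ^ d = s" using s0 s1 d by (simp_all add: x_def real_root_pow_pos)
  have xd: "x ^ d = L + t2 - t1" using x s_def by simp
  have Fx: "?F (t1, t2) = (x, 1 - x)" by (rule eq_flow_eq[OF d W_int]) (use x xd in auto)
  have dev1': "\<tau> * y \<le> t1 * x" if "0 < y" "y < 1" "\<tau> = L + t2 - y ^ d" "0 \<le> \<tau>" "\<tau> \<le> c" for y \<tau>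
  proof -
    have "?F (\<tau>, t2) = (y, 1 - y)" by (rule eq_flow_eq[OF d W_int]) (use that in auto)
    then show ?thesis using dev1[of \<tau>] that Fx by simp
  qed
  have dev2': "\<sigma> * (1 - y) \<le> t2 * (1 - x)" if "0 < y" "y < 1" "\<sigma> = t1 - L + y ^ d" "0 \<le> \<sigma>" "\<sigma> \<le> c" for y \<sigma>
  proof -
    have "?F (t1, \<sigma>) = (y, 1 - y)" by (rule eq_flow_eq[OF d W_int]) (use that in auto)
    then show ?thesis using dev2[of \<sigma>] that Fx by simp
  qed
  have A: "t1 \<le> D * x ^ d" unfolding D_def
    by (rule focA[OF d x(1,2) xd b(1,2)]) (rule dev1'; assumption)
  have A2: "D * x ^ d \<le> t1" if "t1 < c" unfolding D_def
    by (rule focA2[OF d x(1,2) xd b(1) that]) (rule dev1'; assumption)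
  have B: "t2 \<le> D * x ^ (d - 1) * (1 - x)" unfolding D_def
    by (rule focB[OF d x(1,2) xd b(3,4)]) (rule dev2'; assumption)
  have B2: "D * x ^ (d - 1) * (1 - x) \<le> t2" if "t2 < c" unfolding D_def
    by (rule focB2[OF d x(1,2) xd b(3) that]) (rule dev2'; assumption)
  have U: "t1 - L \<le> t2 * (1 - x)" if "0 \<le> t1 - L"
  proof -
    have "?F (t1, t1 - L) = (0, 1)" by (rule eq_flow_eq[OF d W_zero[OF d]]) simp
    then show ?thesis using dev2[of "t1 - L"] that b Fx L01 by simp
  qed
  have xs: "x ^ d = x ^ (d - 1) * x" "a ^ d = a ^ (d - 1) * a" using pow_split[OF d] by blast+
  have xp: "x ^ (d - 1) > 0" "a ^ (d - 1) > 0" using x a01 by simp_all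
  consider "t2 < t1" | "t1 < t2" | "t1 = t2" by linarith
  then show ?thesis
  proof cases
    case 1
    have xda: "x ^ d < a ^ d" using xd 1 L by simp
    have xa: "x < a" by (rule power_less_imp_less_base[OF xda]) (use a01 in simp)
    have "D * x < D * a" using xa D3 by simp
    moreover have "D * (1 - x) = D - D * x" by (simp add: algebra_simps)
    ultimately have K: "D * (1 - x) > 1" using Da by linarith
    have t2e: "t2 = D * x ^ (d - 1) * (1 - x)" using B B2 1 b by linarith
    have "t2 \<le> x ^ (d - 1)"
    proof (cases "0 \<le> t1 - L")
      case True
      have "t2 * x \<le> x ^ (d - 1) * x" using U[OF True] xd xs by (simp add: algebra_simps)
      then show ?thesis using x by simp
    next
      case False
      have "t2 < x ^ (d - 1) * x" using False xd xs by simp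
      also have "\<dots> \<le> x ^ (d - 1)" using x xp by simp
      finally show ?thesis by simp
    qed
    moreover have "x ^ (d - 1) * 1 < x ^ (d - 1) * (D * (1 - x))" using K xp by (intro mult_strict_left_mono) auto
    moreover have "x ^ (d - 1) * (D * (1 - x)) = D * x ^ (d - 1) * (1 - x)" by (simp add: algebra_simps)
    ultimately show ?thesis using t2e by linarith
  next
    case 2
    have xda: "a ^ d < x ^ d" using xd 2 L by simp
    have xa: "a < x" by (rule power_less_imp_less_base[OF xda]) (use x in simp)
    have t1e: "t1 = D * x ^ d" using A A2 2 b by linarith
    have "(2*D+1) * a - D = 2*(D*a) + a - D" by (simp add: algebra_simps)
    hence "(2*D+1) * a - D \<ge> a" using Da D3 by linarith
    moreover have "(2*D+1) * a < (2*D+1) * x" using xa D3 by simp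
    ultimately have q: "a < (2*D+1) * x - D" by linarith
    have pa: "a ^ (d - 1) < x ^ (d - 1)" using xa a01 d3 by (intro power_strict_mono) auto
    have "a ^ (d - 1) * a < x ^ (d - 1) * ((2*D+1) * x - D)"
      using pa q a01 xp by (intro mult_strict_mono) auto
    moreover have "x ^ (d - 1) * ((2*D+1) * x - D) = (D + 1) * x ^ d - D * x ^ (d - 1) * (1 - x)"
      unfolding xs(1) by (simp add: algebra_simps)
    moreover have "(D + 1) * x ^ d = x ^ d + D * x ^ d" by (simp add: algebra_simps)
    ultimately show ?thesis using B xs(2) L t1e xd by linarith
  next
    case 3
    have "x ^ d = a ^ d" using xd 3 L by simp
    hence xa: "x = a" using x a01 d by (simp add: power_eq_iff_eq_base)
    have "D * a ^ (d - 1) * (1 - a) = a ^ (d - 1) * (D * (1 - a))" by (simp add: algebra_simps)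
    hence e: "D * a ^ (d - 1) * (1 - a) = a ^ (d - 1)" using Da(2) by simp
    have Bc: "t2 \<le> a ^ (d - 1)" using B unfolding xa e .
    have t1c: "t1 = c"
    proof (rule ccontr)
      assume "t1 \<noteq> c"
      hence "D * a ^ d \<le> t1" using A2 b xa by simp
      moreover have "D * a ^ d = (D - 1) * a ^ (d - 1)"
      proof -
        have "D * a ^ d = (D * a) * a ^ (d - 1)" unfolding xs(2) by (simp add: algebra_simps)
        then show ?thesis using Da(1) by simp
      qed
      moreover have "(D - 1) * a ^ (d - 1) > 1 * a ^ (d - 1)" using D3 xp by (intro mult_strict_right_mono) auto
      ultimately show False using Bc 3 by simp
    qed
    then show ?thesis using 3 t Bc by simp
  qed
qed

lemma T_mem:
  fixes d :: nat and a L c :: real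
  assumes d3: "d \<ge> 3" and a: "a = (real d - 1) / real d" and L: "L = a ^ d"
    and c0: "0 \<le> c" and cb: "c \<le> a ^ (d - 1)"
  shows "(c, c) \<in> toll_eq (\<lambda>y. y ^ d) (\<lambda>_. L) c"
proof -
  have d: "d \<ge> 1" using d3 by simp
  define D where "D = real d"
  have D3: "D \<ge> 3" using d3 by (simp add: D_def)
  have Da: "D * a = D - 1" "D * (1 - a) = 1" using D3 by (simp_all add: a D_def field_simps)
  have a01: "0 < a" "a < 1" using D3 Da by (auto simp: a D_def field_simps)
  have L01: "0 < L" "L < 1" using a01 d power_strict_mono[of a 1 d] by (simp_all add: L)
  define b where "b = a ^ (d - 1)"
  have bp: "b > 0" using a01 by (simp add: b_def)
  have Lb: "L = b * a" using pow_split[OF d, of a] by (simp add: L b_def)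
  have "D * L = (D * a) * b" using Lb by (simp add: algebra_simps)
  hence DL: "D * L = (D - 1) * b" using Da(1) by simp
  have cb': "c \<le> b" using cb by (simp add: b_def)
  let ?F = "eq_flow (\<lambda>y. y ^ d) (\<lambda>_. L)"
  have Fcc: "?F (c, c) = (a, 1 - a)" by (rule eq_flow_eq[OF d W_int]) (use a01 L in auto)
  have h: "(L + c) * y - y ^ Suc d \<le> c * a" if y: "a \<le> y" for y
  proof -
    have cv: "y ^ Suc d \<ge> a ^ Suc d + (D + 1) * a ^ d * (y - a)"
      using conv_pow[of a y "Suc d"] a01 y by (simp add: D_def add.commute)
    have as: "a ^ Suc d = L * a" using L by (simp add: mult.commute)
    have "(c - D * L) * (y - a) \<le> 0"
    proof -
      have "c - D * L \<le> 0" using DL cb' D3 bp by (smt (verit, best) mult_le_cancel_right1)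
      then show ?thesis using y by (simp add: mult_nonpos_nonneg)
    qed
    moreover have "(L + c) * y - (L * a + (D + 1) * L * (y - a)) = c * a + (c - D * L) * (y - a)"
      by (simp add: algebra_simps)
    ultimately show ?thesis using cv as L by (simp add: algebra_simps)
  qed
  have own1: "\<tau> * fst (?F (\<tau>, c)) \<le> c * a" if \<tau>: "0 \<le> \<tau>" "\<tau> \<le> c" for \<tau>
  proof (cases "L + c - \<tau> \<ge> 1")
    case True
    hence "?F (\<tau>, c) = (1, 0)" using eq_flow_eq[OF d W_one, of L "(\<tau>, c)"] by simp
    moreover have "(L + c) * 1 - 1 ^ Suc d \<le> c * a" using h[of 1] a01 by simp
    ultimately show ?thesis using True by simp
  next
    case False
    define y where "y = root d (L + c - \<tau>)"
    have y: "0 < y" "y < 1" "y ^ d = L + c - \<tau>" using False \<tau> L01 d by (simp_all add: y_def real_root_pow_pos)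
    have Fy: "?F (\<tau>, c) = (y, 1 - y)" by (rule eq_flow_eq[OF d W_int]) (use y in auto)
    have ad: "a ^ d \<le> y ^ d" using y \<tau> L by simp
    have ay: "a \<le> y"
    proof (rule ccontr)
      assume "\<not> a \<le> y"
      hence "y ^ d < a ^ d" using y d by (intro power_strict_mono) auto
      then show False using ad by linarith
    qed
    have te: "\<tau> = L + c - y ^ d" using y(3) by simp
    have "\<tau> * y = (L + c) * y - y ^ Suc d" by (subst te) (simp add: algebra_simps)
    then show ?thesis using h[OF ay] Fy by simp
  qed
  have own2: "\<sigma> * snd (?F (c, \<sigma>)) \<le> c * (1 - a)" if \<sigma>: "0 \<le> \<sigma>" "\<sigma> \<le> c" for \<sigma>
  proof (cases "L + \<sigma> - c \<le> 0")
    case True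
    hence "?F (c, \<sigma>) = (0, 1)" using eq_flow_eq[OF d W_zero[OF d], of L "(c, \<sigma>)"] by simp
    moreover have "c * (1 - a) - (c - L) = a * (b - c)" using Lb by (simp add: algebra_simps)
    moreover have "a * (b - c) \<ge> 0" using a01 cb' by simp
    ultimately show ?thesis using True by simp
  next
    case False
    define y where "y = root d (L + \<sigma> - c)"
    have y: "0 < y" "y < 1" "y ^ d = L + \<sigma> - c" using False \<sigma> L01 d by (simp_all add: y_def real_root_pow_pos)
    have Fy: "?F (c, \<sigma>) = (y, 1 - y)" by (rule eq_flow_eq[OF d W_int]) (use y in auto)
    have ad: "y ^ d \<le> a ^ d" using y \<sigma> L by simp
    have ya: "y \<le> a"
    proof (rule ccontr)
      assume "\<not> y \<le> a"
      hence "a ^ d < y ^ d" using a01 d by (intro power_strict_mono) auto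
      then show False using ad by linarith
    qed
    have am: "y ^ (d - 1) * (1 - y) \<le> a ^ (d - 1) * (1 - a)"
    proof (rule amgm)
      show "1 \<le> d - 1" using d3 by simp
      show "a = real (d - 1) / (real (d - 1) + 1)" using d3 by (simp add: a of_nat_diff)
    qed (use y in auto)
    have g0: "y * (y ^ (d - 1) * (1 - y)) \<le> y * (b * (1 - a))" using am y by (simp add: b_def mult_left_mono)
    have eqn: "y ^ d * (1 - y) = y * (y ^ (d - 1) * (1 - y))" using pow_split[OF d, of y] by (simp add: algebra_simps)
    have g: "y ^ d * (1 - y) \<le> y * (b * (1 - a))" unfolding eqn by (rule g0)
    have se: "\<sigma> = c - L + y ^ d" using y(3) by simp
    have "\<sigma> * (1 - y) = (c - L) * (1 - y) + y ^ d * (1 - y)" by (subst se) (simp add: algebra_simps)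
    moreover have "(c - L) * (1 - y) + y * (b * (1 - a)) - c * (1 - a) = (a - y) * (c - b)"
      using Lb by (simp add: algebra_simps)
    moreover have "(a - y) * (c - b) \<le> 0" using ya cb' by (simp add: mult_nonneg_nonpos)
    ultimately show ?thesis using g Fy by simp
  qed
  show ?thesis unfolding toll_eq_def profit1_def profit2_def using c0 own1 own2 Fcc by auto
qed

theorem mainTheorem16:
  fixes d :: nat
  assumes "d \<ge> 3"
  defines "xopt \<equiv> ((real d - 1) / (real d * (real d + 1) powr (1 / real d)),
                    1 - (real d - 1) / (real d * (real d + 1) powr (1 / real d)))"
  shows "(\<forall>c \<ge> 0. toll_eq (lat1 d) (lat2 d) c \<noteq> {} \<longleftrightarrow> c \<le> ((real d - 1) / real d) ^ (d - 1))
    \<and> (\<forall>c. 0 \<le> c \<and> c \<le> ((real d - 1) / real d) ^ (d - 1) \<longrightarrow>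
           toll_eq (lat1 d) (lat2 d) c = {(c, c)}
         \<and> eq_flow (lat1 d) (lat2 d) (c, c) = eq_flow (lat1 d) (lat2 d) (0, 0)
         \<and> eq_flow (lat1 d) (lat2 d) (0, 0) = ((real d - 1) / real d, 1 / real d))
    \<and> feasible_flow xopt
    \<and> (\<forall>x. feasible_flow x \<longrightarrow> social_cost (lat1 d) (lat2 d) xopt \<le> social_cost (lat1 d) (lat2 d) x)
    \<and> (INF c \<in> {0::real..}. worst_ratio (lat1 d) (lat2 d) xopt c) = ereal (ratio_value d)
    \<and> filterlim ratio_value at_top sequentially"
proof -
  have d3: "d \<ge> 3" by (rule assms(1))
  have d: "d \<ge> 1" using d3 by simp
  define a where "a = (real d - 1) / real d"
  define L where "L = a ^ d"
  define D where "D = real d"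
  have D3: "D \<ge> 3" using d3 by (simp add: D_def)
  have Da: "D * a = D - 1" "D * (1 - a) = 1" using D3 by (simp_all add: a_def D_def field_simps)
  have a01: "0 < a" "a < 1" using D3 Da by (auto simp: a_def D_def field_simps)
  have L01: "0 < L" "L < 1" using a01 d power_strict_mono[of a 1 d] by (simp_all add: L_def)
  have l1: "lat1 d = (\<lambda>y. y ^ d)" by (rule ext) (simp add: lat1_def)
  have l2: "lat2 d = (\<lambda>_. L)" by (rule ext) (simp add: lat2_def L_def a_def)
  let ?T = "toll_eq (\<lambda>y. y ^ d) (\<lambda>_. L)"
  let ?F = "eq_flow (\<lambda>y. y ^ d) (\<lambda>_. L)"
  let ?C = "social_cost (\<lambda>y. y ^ d) (\<lambda>_. L)"
  define b where "b = a ^ (d - 1)"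
  have bp: "b > 0" using a01 by (simp add: b_def)
  have Fa: "?F (c, c) = (a, 1 - a)" for c by (rule eq_flow_eq[OF d W_int]) (use a01 L_def in auto)
  have P1: "?T c \<noteq> {} \<longleftrightarrow> c \<le> b" if "c \<ge> 0" for c
  proof
    assume "?T c \<noteq> {}"
    then obtain t where t: "t \<in> ?T c" by blast
    show "c \<le> b"
    proof (cases "c = 0")
      case True then show ?thesis using bp by simp
    next
      case False
      then show ?thesis using T_subset[OF d3 a_def L_def _ t] that by (simp add: b_def)
    qed
  next
    assume "c \<le> b"
    then show "?T c \<noteq> {}" using T_mem[OF d3 a_def L_def that] by (auto simp: b_def)
  qed
  have P2: "?T c = {(c, c)}" if "0 \<le> c" "c \<le> b" for c
  proof
    show "{(c, c)} \<subseteq> ?T c" using T_mem[OF d3 a_def L_def that(1)] that(2) by (simp add: b_def)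
    show "?T c \<subseteq> {(c, c)}"
    proof
      fix t assume t: "t \<in> ?T c"
      show "t \<in> {(c, c)}"
      proof (cases "c = 0")
        case True
        then have "fst t = 0" "snd t = 0" using t by (auto simp: toll_eq_def)
        then show ?thesis using True by (simp add: prod_eq_iff)
      next
        case False
        then show ?thesis using T_subset[OF d3 a_def L_def _ t] that by simp
      qed
    qed
  qed
  define r where "r = (D + 1) powr (1 / D)"
  have rp: "r > 0" using D3 by (simp add: r_def)
  have r1: "r \<ge> 1" using D3 unfolding r_def by (intro ge_one_powr_ge_zero) auto
  have rd: "r ^ d = D + 1"
  proof -
    have "r ^ d = r powr real d" using rp by (simp add: powr_realpow)
    also have "\<dots> = (D + 1) powr (1 / D * D)" unfolding r_def D_def using D3 by (simp add: powr_powr D_def)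
    also have "\<dots> = D + 1" using D3 by simp
    finally show ?thesis .
  qed
  define xs where "xs = a / r"
  have xopt: "xopt = (xs, 1 - xs)" unfolding xopt_def xs_def a_def r_def D_def by (simp add: field_simps)
  have xs01: "0 \<le> xs" "xs \<le> 1" using a01 rp r1 by (simp_all add: xs_def divide_le_eq_1)
  have xsd: "xs ^ d = L / (D + 1)" unfolding xs_def L_def using rd by (simp add: power_divide)
  have Cxs: "?C (xs, 1 - xs) = L * (1 - D * xs / (D + 1))"
  proof -
    have "?C (xs, 1 - xs) = xs ^ d * xs + L * (1 - xs)" by (simp add: social_cost_def)
    also have "\<dots> = L * (1 - D * xs / (D + 1))" unfolding xsd using D3 by (simp add: field_simps)
    finally show ?thesis .
  qed
  have opt: "?C (xs, 1 - xs) \<le> ?C x" if "feasible_flow x" for x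
  proof -
    have x: "0 \<le> fst x" "snd x = 1 - fst x" using that by (auto simp: feasible_flow_def)
    have cv: "fst x ^ Suc d \<ge> xs ^ Suc d + (D + 1) * xs ^ d * (fst x - xs)"
      using conv_pow[of xs "fst x" "Suc d"] xs01 x by (simp add: D_def add.commute)
    have "(D + 1) * xs ^ d = L" unfolding xsd using D3 by simp
    hence h: "fst x ^ Suc d \<ge> xs ^ Suc d + L * (fst x - xs)" using cv by (simp add: mult.assoc)
    have "?C x = fst x ^ Suc d + L * (1 - fst x)" using x by (simp add: social_cost_def mult.commute)
    moreover have "?C (xs, 1 - xs) = xs ^ Suc d + L * (1 - xs)" by (simp add: social_cost_def mult.commute)
    moreover have "L * (fst x - xs) = L * (1 - xs) - L * (1 - fst x)" by (simp add: algebra_simps)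
    ultimately show ?thesis using h by linarith
  qed
  have Cc: "?C (a, 1 - a) = L" unfolding social_cost_def L_def by (simp add: algebra_simps)
  define q where "q = (D + 1) powr ((D + 1) / D)"
  have q: "q = (D + 1) * r"
  proof -
    have "(D + 1) / D = 1 + 1 / D" using D3 by (simp add: field_simps)
    then show ?thesis unfolding q_def r_def using D3 by (simp add: powr_add)
  qed
  have R: "L / ?C (xs, 1 - xs) = ratio_value d"
  proof -
    have rv: "ratio_value d = q / (q - (D - 1))" by (simp add: ratio_value_def q_def D_def)
    have aD': "a = (D - 1) / D" by (simp add: a_def D_def)
    have e1: "D * ((D - 1) / D / r) = (D - 1) / r" using D3 by simp
    have "D * xs / (D + 1) = (D - 1) / r / (D + 1)" unfolding xs_def aD' e1 ..
    also have "\<dots> = (D - 1) / q" unfolding q by (simp add: divide_divide_eq_left mult.commute)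
    finally have "D * xs / (D + 1) = (D - 1) / q" .
    moreover have "q > D - 1" using q r1 D3 by (smt (verit, best) mult_le_cancel_left1)
    ultimately have k: "D * xs / (D + 1) = (D - 1) / q" and qg: "q > D - 1" by blast+
    have qp: "q > 0" using qg D3 by linarith
    have "L / (L * (1 - D * xs / (D + 1))) = 1 / (1 - (D - 1) / q)" unfolding k using L01 by simp
    also have "1 - (D - 1) / q = (q - (D - 1)) / q" using qp by (simp add: field_simps)
    finally show ?thesis unfolding Cxs rv by simp
  qed
  have WR: "worst_ratio (\<lambda>y. y ^ d) (\<lambda>_. L) (xs, 1 - xs) c = (if c \<le> b then ereal (ratio_value d) else \<infinity>)"
    if "c \<ge> 0" for c
  proof (cases "c \<le> b")
    case True
    then show ?thesis unfolding worst_ratio_def using P2[OF that True] Fa[of c] Cc R by simp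
  next
    case False
    then show ?thesis unfolding worst_ratio_def using P1[OF that] by simp
  qed
  have INF: "(INF c \<in> {0::real..}. worst_ratio (\<lambda>y. y ^ d) (\<lambda>_. L) (xs, 1 - xs) c) = ereal (ratio_value d)"
  proof (rule antisym)
    show "(INF c \<in> {0::real..}. worst_ratio (\<lambda>y. y ^ d) (\<lambda>_. L) (xs, 1 - xs) c) \<le> ereal (ratio_value d)"
      using INF_lower[of 0 "{0::real..}" "worst_ratio (\<lambda>y. y ^ d) (\<lambda>_. L) (xs, 1 - xs)"] WR[of 0] bp by simp
    show "ereal (ratio_value d) \<le> (INF c \<in> {0::real..}. worst_ratio (\<lambda>y. y ^ d) (\<lambda>_. L) (xs, 1 - xs) c)"
      by (rule INF_greatest) (simp add: WR)
  qed
  have lim: "filterlim ratio_value at_top sequentially"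
    unfolding ratio_value_def by real_asymp
  have aD: "(real d - 1) / real d = a" "1 / real d = 1 - a" using D3 by (simp_all add: a_def D_def field_simps)
  show ?thesis
    unfolding l1 l2 xopt aD
    using P1 P2 Fa xs01 opt INF lim b_def
    by (auto simp: feasible_flow_def)
qed

end
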